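(* Let $\mathbf k=(k_1,\ldots,k_r)\in\mathbb N^r$, $\mathbf x=(x_1,\ldots,x_r)$ with $|x_j|\le1$, $l\in\mathbb N_0$ and $n\in\mathbb N$. Then \[ \sum_{n\ge n_1\ge n_2\ge\cdots\ge n_r>0}\prod_{j=1}^r\frac{x_j^{n_j+l}}{(n_j+l)^{k_j}}=(-1)^r\sum_{j=0}^r(-1)^j\,\zeta^\star_{n+l}(k_1,\ldots,k_j;x_1,\ldots,x_j)\,\zeta_l(k_r,k_{r-1},\ldots,k_{j+1};x_r,x_{r-1},\ldots,x_{j+1}). \]
   Context: $\zeta_n(\mathbf k;\mathbf x)=\sum_{n\ge n_1>\cdots>n_r\ge1}\prod_i x_i^{n_i}/n_i^{k_i}$ and $\zeta^\star_n(\mathbf k;\mathbf x)=\sum_{n\ge n_1\ge\cdots\ge n_r\ge1}\prod_i x_i^{n_i}/n_i^{k_i}$ for $n\in\mathbb N_0$; both equal $1$ for the empty index, and a sum over an empty range is $0$. *)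

theory Defs
  imports Complex_Main
begin

text \<open>Truncated multiple polylogarithm sums, indices given as lists
  ks = [k_1,...,k_r], xs = [x_1,...,x_r] (of equal length).
  mzv_trunc n ks xs  = sum over n >= n_1 > n_2 > ... > n_r >= 1 of prod x_i^n_i / n_i^k_i,
  mzsv_trunc n ks xs = sum over n >= n_1 >= n_2 >= ... >= n_r >= 1 of the same.\<close>

fun mzv_trunc :: "nat \<Rightarrow> nat list \<Rightarrow> complex list \<Rightarrow> complex" where
  "mzv_trunc n (k # ks) (x # xs) =
     (\<Sum>m=1..n. x ^ m / of_nat m ^ k * mzv_trunc (m - 1) ks xs)"
| "mzv_trunc n _ _ = 1"

fun mzsv_trunc :: "nat \<Rightarrow> nat list \<Rightarrow> complex list \<Rightarrow> complex" where
  "mzsv_trunc n (k # ks) (x # xs) =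
     (\<Sum>m=1..n. x ^ m / of_nat m ^ k * mzsv_trunc m ks xs)"
| "mzsv_trunc n _ _ = 1"

fun shifted_star :: "nat \<Rightarrow> nat \<Rightarrow> nat list \<Rightarrow> complex list \<Rightarrow> complex" where
  "shifted_star l n (k # ks) (x # xs) =
     (\<Sum>m=1..n. x ^ (m + l) / of_nat (m + l) ^ k * shifted_star l m ks xs)"
| "shifted_star l n _ _ = 1"

end

theory Submission
  imports Defs
begin

fun BB :: "nat \<Rightarrow> nat \<Rightarrow> nat list \<Rightarrow> complex list \<Rightarrow> complex" where
  "BB l N (k # ks) (x # xs) = (\<Sum>m=Suc l..N. x ^ m / of_nat m ^ k * BB l m ks xs)"
| "BB l N _ _ = 1"

lemma BB_zero: "N \<le> l \<Longrightarrow> BB l N (k # ks) (x # xs) = 0"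
  by simp

lemma BB_snoc:
  assumes "length ks = length xs" "Suc l \<le> N"
  shows "BB l N (ks @ [k]) (xs @ [x]) =
    BB (Suc l) N (ks @ [k]) (xs @ [x]) + x ^ Suc l / of_nat (Suc l) ^ k * BB l N ks xs"
  using assms
proof (induction ks arbitrary: xs N)
  case Nil
  then show ?case by (simp add: sum.atLeast_Suc_atMost)
next
  case (Cons a ks)
  then obtain b xs' where xs: "xs = b # xs'" and len: "length ks = length xs'"
    by (cases xs) auto
  let ?c = "x ^ Suc l / of_nat (Suc l) ^ k"
  have "BB l N ((a # ks) @ [k]) (xs @ [x]) =
      (\<Sum>m=Suc l..N. b ^ m / of_nat m ^ a * BB l m (ks @ [k]) (xs' @ [x]))"
    by (simp add: xs)
  also have "\<dots> = (\<Sum>m=Suc l..N. b ^ m / of_nat m ^ a * BB (Suc l) m (ks @ [k]) (xs' @ [x]))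
      + ?c * (\<Sum>m=Suc l..N. b ^ m / of_nat m ^ a * BB l m ks xs')"
    by (simp add: Cons.IH[OF len] sum.distrib sum_distrib_left algebra_simps)
  also have "(\<Sum>m=Suc l..N. b ^ m / of_nat m ^ a * BB (Suc l) m (ks @ [k]) (xs' @ [x]))
      = BB (Suc l) N ((a # ks) @ [k]) (xs @ [x])"
  proof -
    obtain k1 ks1 x1 xs1 where e: "ks @ [k] = k1 # ks1" "xs' @ [x] = x1 # xs1"
      by (cases "ks @ [k]"; cases "xs' @ [x]") auto
    show ?thesis using Cons.prems(2)
      by (simp add: xs e sum.atLeast_Suc_atMost)
  qed
  also have "(\<Sum>m=Suc l..N. b ^ m / of_nat m ^ a * BB l m ks xs') = BB l N (a # ks) xs"
    by (simp add: xs)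
  finally show ?case .
qed

lemma BB_0: "length ks = length xs \<Longrightarrow> BB 0 N ks xs = mzsv_trunc N ks xs"
proof (induction ks arbitrary: xs N)
  case Nil then show ?case by (cases xs) auto
next
  case (Cons a ks)
  then show ?case by (cases xs) auto
qed

lemma mzv_0_nonempty: "mzv_trunc 0 (k # ks) (x # xs) = 0"
  by simp

lemma mzv_Suc: "mzv_trunc (Suc l) (k # ks) (x # xs) =
   mzv_trunc l (k # ks) (x # xs) + x ^ Suc l / of_nat (Suc l) ^ k * mzv_trunc l ks xs"
  by simp

definition RR :: "nat \<Rightarrow> nat \<Rightarrow> nat list \<Rightarrow> complex list \<Rightarrow> complex" where
  "RR l N ks xs = (-1) ^ length ks * (\<Sum>j=0..length ks. (-1) ^ j *
       mzsv_trunc N (take j ks) (take j xs) *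
       mzv_trunc l (rev (drop j ks)) (rev (drop j xs)))"

lemma RR_0: assumes "length ks = length xs" shows "RR 0 N ks xs = mzsv_trunc N ks xs"
proof (cases "length ks")
  case 0 then show ?thesis using assms by (simp add: RR_def)
next
  case (Suc r)
  have z: "mzv_trunc 0 (rev (drop j ks)) (rev (drop j xs)) = 0" if jl: "j < length ks" for j
  proof -
    have ne: "rev (drop j ks) \<noteq> []" "rev (drop j xs) \<noteq> []" using jl assms by auto
    obtain k1 ks1 where e1: "rev (drop j ks) = k1 # ks1" using ne(1) by (meson list.exhaust)
    obtain x1 xs1 where e2: "rev (drop j xs) = x1 # xs1" using ne(2) by (meson list.exhaust)
    have e: "rev (drop j ks) = k1 # ks1" "rev (drop j xs) = x1 # xs1" using e1 e2 by auto
    show ?thesis by (simp add: e)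
  qed
  have "(\<Sum>j=0..length ks. (-1) ^ j *
       mzsv_trunc N (take j ks) (take j xs) *
       mzv_trunc 0 (rev (drop j ks)) (rev (drop j xs))) =
       (\<Sum>j=0..r. (-1) ^ j *
       mzsv_trunc N (take j ks) (take j xs) *
       mzv_trunc 0 (rev (drop j ks)) (rev (drop j xs))) + (-1) ^ length ks * mzsv_trunc N ks xs"
  proof -
    have "mzv_trunc 0 (rev (drop (Suc r) ks)) (rev (drop (Suc r) xs)) = 1"
      using assms Suc by simp
    moreover have "take (Suc r) ks = ks" "take (Suc r) xs = xs" using assms Suc by auto
    ultimately show ?thesis unfolding Suc sum.atLeast0_atMost_Suc by simp
  qed
  also have "(\<Sum>j=0..r. (-1) ^ j *
       mzsv_trunc N (take j ks) (take j xs) *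
       mzv_trunc 0 (rev (drop j ks)) (rev (drop j xs))) = 0"
    using z Suc by (intro sum.neutral) auto
  finally show ?thesis by (simp add: RR_def power_mult_distrib[symmetric])
qed

lemma RR_snoc:
  assumes "length ks = length xs"
  shows "RR (Suc l) N (ks @ [k]) (xs @ [x]) =
    RR l N (ks @ [k]) (xs @ [x]) - x ^ Suc l / of_nat (Suc l) ^ k * RR l N ks xs"
proof -
  let ?r = "length ks"
  let ?c = "x ^ Suc l / of_nat (Suc l) ^ k"
  define S where "S j = mzsv_trunc N (take j ks) (take j xs)" for j
  define T where "T = mzsv_trunc N (ks @ [k]) (xs @ [x])"
  have key: "\<And>L. RR L N (ks @ [k]) (xs @ [x]) = (-1) ^ Suc ?r *
     ((\<Sum>j=0..?r. (-1) ^ j * S j *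
       mzv_trunc L (k # rev (drop j ks)) (x # rev (drop j xs))) + (-1) ^ Suc ?r * T)"
    using assms by (simp add: RR_def sum.atLeast0_atMost_Suc S_def T_def)
  have RRl: "RR l N ks xs = (-1) ^ ?r * (\<Sum>j=0..?r. (-1) ^ j * S j *
       mzv_trunc l (rev (drop j ks)) (rev (drop j xs)))"
    by (simp add: RR_def S_def)
  have "(\<Sum>j=0..?r. (-1) ^ j * S j *
       mzv_trunc (Suc l) (k # rev (drop j ks)) (x # rev (drop j xs))) =
     (\<Sum>j=0..?r. (-1) ^ j * S j *
       mzv_trunc l (k # rev (drop j ks)) (x # rev (drop j xs))) +
     ?c * (\<Sum>j=0..?r. (-1) ^ j * S j * mzv_trunc l (rev (drop j ks)) (rev (drop j xs)))"
    unfolding mzv_Suc by (simp add: sum.distrib sum_distrib_left algebra_simps)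
  then show ?thesis
    unfolding key RRl by (simp add: algebra_simps)
qed

lemma BB_RR: "l \<le> N \<Longrightarrow> length ks = length xs \<Longrightarrow> BB l N ks xs = RR l N ks xs"
proof (induction l arbitrary: ks xs)
  case 0 then show ?case by (simp add: BB_0 RR_0)
next
  case (Suc l)
  show ?case
  proof (cases ks rule: rev_exhaust)
    case Nil
    then have "xs = []" using Suc.prems by simp
    then show ?thesis using Nil by (simp add: RR_def)
  next
    case (snoc ks' k)
    obtain xs' x where xs: "xs = xs' @ [x]" using Suc.prems snoc
      by (cases xs rule: rev_exhaust) auto
    have len: "length ks' = length xs'" using Suc.prems snoc xs by simp
    have "BB (Suc l) N ks xs = BB l N (ks' @ [k]) (xs' @ [x]) -
        x ^ Suc l / of_nat (Suc l) ^ k * BB l N ks' xs'"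
      using BB_snoc[OF len Suc.prems(1), of k x] snoc xs by simp
    also have "\<dots> = RR (Suc l) N ks xs"
      using Suc.IH[of "ks' @ [k]" "xs' @ [x]"] Suc.IH[of ks' xs'] Suc.prems len
      by (simp add: RR_snoc snoc xs)
    finally show ?thesis .
  qed
qed

lemma shifted_BB: "length ks = length xs \<Longrightarrow> shifted_star l n ks xs = BB l (n + l) ks xs"
proof (induction ks arbitrary: xs n)
  case Nil then show ?case by (cases xs) auto
next
  case (Cons a ks)
  then obtain b xs' where xs: "xs = b # xs'" and len: "length ks = length xs'"
    by (cases xs) auto
  have "shifted_star l n (a # ks) xs =
      (\<Sum>m=1..n. b ^ (m + l) / of_nat (m + l) ^ a * BB l (m + l) ks xs')"
    by (simp add: xs Cons.IH[OF len])
  also have "\<dots> = (\<Sum>m=1+l..n+l. b ^ m / of_nat m ^ a * BB l m ks xs')"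
    by (rule sum.shift_bounds_cl_nat_ivl[symmetric])
  finally show ?case by (simp add: xs)
qed

theorem mainTheorem13:
  fixes ks :: "nat list" and xs :: "complex list" and l n :: nat
  assumes "length xs = length ks"
    and "\<forall>k\<in>set ks. k \<ge> 1"
    and "\<forall>x\<in>set xs. norm x \<le> 1"
    and "n \<ge> 1"
  shows "shifted_star l n ks xs =
    (-1) ^ length ks * (\<Sum>j=0..length ks. (-1) ^ j *
       mzsv_trunc (n + l) (take j ks) (take j xs) *
       mzv_trunc l (rev (drop j ks)) (rev (drop j xs)))"
  using shifted_BB[of ks xs l n] BB_RR[of l "n + l" ks xs] assms(1)
  by (simp add: RR_def)

end
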